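(* Let $W$ be any channel in the support of $\mathcal{W}_{Q,\varepsilon}$, let $n\ge1$, and let $r\ge 0$. If $\mathcal{R}^{(0)}_{W,n}\ge r$, then the graph $G_{W,n}$ has a bipartite independent set of size at least $$2^{rn}-2^{rn/2}\left((1+2^q)^n-2^{nq}\right).$$
   Context: Fix an integer $q\ge1$, $Q=2^q$, $[Q]=\{1,\dots,Q\}$, and a symbol $\phi\notin[Q]$. A channel is a function $W=(W_1,W_2)$ with $W_i:[Q]^2\to[Q]\cup\{\phi\}$. For block length $n$, $W^{(n)}_i(x,y)=(W_i(x_1,y_1),\dots,W_i(x_n,y_n))$ for $x,y\in[Q]^n$. A zero-error code of block length $n$ with message sets $[M_1],[M_2]$ consists of encoders $E_i:[M_i]\to[Q]^n$ and decoders $D_i:([Q]\cup\{\phi\})^n\to[M_i]$ with $D_i(W^{(n)}_i(E_1(m_1),E_2(m_2)))=m_i$ for $i=1,2$ and all $(m_1,m_2)\in[M_1]\times[M_2]$. $\mathcal{R}^{(0)}_{W,n}$ is the supremum of $R_1+R_2$ over rate pairs for which a zero-error code of block length $n$ with $M_i=2^{R_in}$ (positive integers) exists. $\mathcal{W}_{Q,\varepsilon}$ is the distribution over channels in which, independently for every $(x,y)\in[Q]^2$, $W(x,y)=(\phi,\phi)$ with probability $\varepsilon$ and $W(x,y)=(x,y)$ otherwise. $G_{W,n}$ is the bipartite graph whose two sides are two copies of $[Q]^n$, with $x^{(n)}$ (left) adjacent to $y^{(n)}$ (right) iff there is an index $i$ with $W(x_i,y_i)=(\phi,\phi)$. In a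 bipartite graph with sides $X,Y$, a bipartite independent set (BPIS) is a pair $(A,B)$ with $A\subseteq X$, $B\subseteq Y$ and no edge between $A$ and $B$; its size is $|A|\cdot|B|$. Logarithms are base 2. *)

theory Defs
  imports Complex_Main
begin

text \<open>Input alphabet [Q] = {1..Q}; the output alphabet [Q] + {phi} is modelled by
  nat option, with None playing the role of the erasure symbol phi.\<close>

type_synonym channel = "nat \<Rightarrow> nat \<Rightarrow> nat option \<times> nat option"

definition in_support :: "nat \<Rightarrow> real \<Rightarrow> channel \<Rightarrow> bool" where
  "in_support Q \<epsilon> W \<longleftrightarrow>
     (\<forall>x\<in>{1..Q}. \<forall>y\<in>{1..Q}.
        (W x y = (None, None) \<and> \<epsilon> > 0) \<or> (W x y = (Some x, Some y) \<and> \<epsilon> < 1))"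

definition words :: "nat \<Rightarrow> nat \<Rightarrow> nat list set" where
  "words Q n = {x. length x = n \<and> set x \<subseteq> {1..Q}}"

definition out_words :: "nat \<Rightarrow> nat \<Rightarrow> nat option list set" where
  "out_words Q n = {w. length w = n \<and> (\<forall>s\<in>set w. s = None \<or> (\<exists>a\<in>{1..Q}. s = Some a))}"

definition chan1 :: "channel \<Rightarrow> nat list \<Rightarrow> nat list \<Rightarrow> nat option list" where
  "chan1 W x y = map2 (\<lambda>a b. fst (W a b)) x y"

definition chan2 :: "channel \<Rightarrow> nat list \<Rightarrow> nat list \<Rightarrow> nat option list" where
  "chan2 W x y = map2 (\<lambda>a b. snd (W a b)) x y"

definition zero_error_code ::
  "nat \<Rightarrow> nat \<Rightarrow> channel \<Rightarrow> nat \<Rightarrow> nat \<Rightarrow> (nat \<Rightarrow> nat list) \<Rightarrow> (nat \<Rightarrow> nat list)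
     \<Rightarrow> (nat option list \<Rightarrow> nat) \<Rightarrow> (nat option list \<Rightarrow> nat) \<Rightarrow> bool" where
  "zero_error_code Q n W M1 M2 E1 E2 D1 D2 \<longleftrightarrow>
     (\<forall>m\<in>{1..M1}. E1 m \<in> words Q n) \<and> (\<forall>m\<in>{1..M2}. E2 m \<in> words Q n) \<and>
     (\<forall>w\<in>out_words Q n. D1 w \<in> {1..M1}) \<and> (\<forall>w\<in>out_words Q n. D2 w \<in> {1..M2}) \<and>
     (\<forall>m1\<in>{1..M1}. \<forall>m2\<in>{1..M2}.
        D1 (chan1 W (E1 m1) (E2 m2)) = m1 \<and> D2 (chan2 W (E1 m1) (E2 m2)) = m2)"

definition has_code :: "nat \<Rightarrow> nat \<Rightarrow> channel \<Rightarrow> nat \<Rightarrow> nat \<Rightarrow> bool" where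
  "has_code Q n W M1 M2 \<longleftrightarrow> (\<exists>E1 E2 D1 D2. zero_error_code Q n W M1 M2 E1 E2 D1 D2)"

definition sum_rate :: "nat \<Rightarrow> nat \<Rightarrow> channel \<Rightarrow> real" where
  "sum_rate Q n W = Sup {R1 + R2 | R1 R2. \<exists>M1 M2::nat. M1 \<ge> 1 \<and> M2 \<ge> 1 \<and>
      real M1 = 2 powr (R1 * real n) \<and> real M2 = 2 powr (R2 * real n) \<and> has_code Q n W M1 M2}"

definition G_adj :: "channel \<Rightarrow> nat \<Rightarrow> nat list \<Rightarrow> nat list \<Rightarrow> bool" where
  "G_adj W n x y \<longleftrightarrow> (\<exists>i<n. W (x ! i) (y ! i) = (None, None))"

definition bpis :: "'a set \<Rightarrow> 'b set \<Rightarrow> ('a \<Rightarrow> 'b \<Rightarrow> bool) \<Rightarrow> 'a set \<Rightarrow> 'b set \<Rightarrow> bool" where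
  "bpis X Y adj A B \<longleftrightarrow> A \<subseteq> X \<and> B \<subseteq> Y \<and> (\<forall>a\<in>A. \<forall>b\<in>B. \<not> adj a b)"

end

theory Submission imports Defs begin

definition Lset :: "nat \<Rightarrow> nat \<Rightarrow> nat option list set" where
  "Lset Q n = {w. set w \<subseteq> insert None (Some ` {1..Q}) \<and> length w = n \<and> None \<in> set w}"

lemma Lset_card: "card (Lset Q n) = (Q+1)^n - Q^n" and Lset_fin: "finite (Lset Q n)"
proof -
  let ?X = "insert None (Some ` {1..Q})"
  let ?Y = "Some ` {1..Q}"
  have cX: "card ?X = Q+1" by (simp add: card_image)
  have cY: "card ?Y = Q" by (simp add: card_image)
  have eq: "Lset Q n = {xs. set xs \<subseteq> ?X \<and> length xs = n} - {xs. set xs \<subseteq> ?Y \<and> length xs = n}"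
    unfolding Lset_def by auto
  have f1: "finite {xs. set xs \<subseteq> ?X \<and> length xs = n}" by (rule finite_lists_length_eq) simp
  have f2: "finite {xs. set xs \<subseteq> ?Y \<and> length xs = n}" by (rule finite_lists_length_eq) simp
  have sub: "{xs. set xs \<subseteq> ?Y \<and> length xs = n} \<subseteq> {xs. set xs \<subseteq> ?X \<and> length xs = n}" by auto
  show "finite (Lset Q n)" using eq f1 by simp
  show "card (Lset Q n) = (Q+1)^n - Q^n"
    unfolding eq using card_Diff_subset[OF f2 sub] card_lists_length_eq[of ?X n] card_lists_length_eq[of ?Y n] cX cY
    by simp
qed

lemma chan1_in_L:
  assumes sup: "in_support Q e W" and x: "x \<in> words Q n" and y: "y \<in> words Q n"
    and adj: "G_adj W n x y"
  shows "chan1 W x y \<in> Lset Q n" "chan2 W x y \<in> Lset Q n"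
proof -
  from x y have lx: "length x = n" "length y = n" and sx: "set x \<subseteq> {1..Q}" "set y \<subseteq> {1..Q}"
    by (auto simp: words_def)
  from adj obtain i where i: "i < n" "W (x!i) (y!i) = (None, None)" by (auto simp: G_adj_def)
  have W: "\<And>a b. a \<in> {1..Q} \<Longrightarrow> b \<in> {1..Q} \<Longrightarrow> W a b = (None,None) \<or> W a b = (Some a, Some b)"
    using sup unfolding in_support_def by (metis atLeastAtMost_iff)
  have s1: "set (chan1 W x y) \<subseteq> insert None (Some ` {1..Q})"
  proof
    fix s assume "s \<in> set (chan1 W x y)"
    then obtain a b where ab: "(a,b) \<in> set (zip x y)" "s = fst (W a b)" by (auto simp: chan1_def)
    then have "a \<in> {1..Q}" "b \<in> {1..Q}" using sx by (auto dest: set_zip_leftD set_zip_rightD)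
    then show "s \<in> insert None (Some ` {1..Q})" using W[of a b] ab by auto
  qed
  have s2: "set (chan2 W x y) \<subseteq> insert None (Some ` {1..Q})"
  proof
    fix s assume "s \<in> set (chan2 W x y)"
    then obtain a b where ab: "(a,b) \<in> set (zip x y)" "s = snd (W a b)" by (auto simp: chan2_def)
    then have "a \<in> {1..Q}" "b \<in> {1..Q}" using sx by (auto dest: set_zip_leftD set_zip_rightD)
    then show "s \<in> insert None (Some ` {1..Q})" using W[of a b] ab by auto
  qed
  have "chan1 W x y ! i = None" "chan2 W x y ! i = None" using i lx by (auto simp: chan1_def chan2_def)
  moreover have "length (chan1 W x y) = n" "length (chan2 W x y) = n" using lx by (auto simp: chan1_def chan2_def)
  ultimately have "None \<in> set (chan1 W x y)" "None \<in> set (chan2 W x y)" using i by (metis nth_mem)+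
  then show "chan1 W x y \<in> Lset Q n" "chan2 W x y \<in> Lset Q n"
    using s1 s2 \<open>length (chan1 W x y) = n\<close> \<open>length (chan2 W x y) = n\<close> by (auto simp: Lset_def)
qed

lemma words_fin: "finite (words Q n)" and words_card: "card (words Q n) = Q^n"
  unfolding words_def using finite_lists_length_eq[of "{1..Q}" n] card_lists_length_eq[of "{1..Q}" n]
  by (simp_all add: conj_commute)

lemma code_inj1:
  assumes "zero_error_code Q n W M1 M2 E1 E2 D1 D2" "M2 \<ge> 1"
  shows "inj_on E1 {1..M1}"
proof (rule inj_onI)
  fix a b assume "a \<in> {1..M1}" "b \<in> {1..M1}" "E1 a = E1 b"
  with assms show "a = b" unfolding zero_error_code_def
    by (metis atLeastAtMost_iff order_refl)
qed

lemma code_inj2: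
  assumes "zero_error_code Q n W M1 M2 E1 E2 D1 D2" "M1 \<ge> 1"
  shows "inj_on E2 {1..M2}"
proof (rule inj_onI)
  fix a b assume "a \<in> {1..M2}" "b \<in> {1..M2}" "E2 a = E2 b"
  with assms show "a = b" unfolding zero_error_code_def
    by (metis atLeastAtMost_iff order_refl)
qed

lemma code_bound1:
  assumes "zero_error_code Q n W M1 M2 E1 E2 D1 D2" "M2 \<ge> 1"
  shows "M1 \<le> Q^n"
proof -
  have "E1 ` {1..M1} \<subseteq> words Q n" using assms(1) by (auto simp: zero_error_code_def)
  then have "card (E1 ` {1..M1}) \<le> Q^n" using words_fin words_card by (metis card_mono)
  with card_image[OF code_inj1[OF assms]] show ?thesis by simp
qed

lemma code_bound2:
  assumes "zero_error_code Q n W M1 M2 E1 E2 D1 D2" "M1 \<ge> 1"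
  shows "M2 \<le> Q^n"
proof -
  have "E2 ` {1..M2} \<subseteq> words Q n" using assms(1) by (auto simp: zero_error_code_def)
  then have "card (E2 ` {1..M2}) \<le> Q^n" using words_fin words_card by (metis card_mono)
  with card_image[OF code_inj2[OF assms]] show ?thesis by simp
qed

lemma get_code:
  assumes "Q \<ge> 1" "n \<ge> 1" "sum_rate Q n W \<ge> r"
  shows "\<exists>M1 M2. M1 \<ge> 1 \<and> M2 \<ge> 1 \<and> has_code Q n W M1 M2 \<and> real (M1*M2) \<ge> 2 powr (r * real n)"
proof -
  define S where "S = {R1 + R2 | R1 R2. \<exists>M1 M2::nat. M1 \<ge> 1 \<and> M2 \<ge> 1 \<and>
      real M1 = 2 powr (R1 * real n) \<and> real M2 = 2 powr (R2 * real n) \<and> has_code Q n W M1 M2}"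
  have np: "real n > 0" using assms by simp
  have sub: "S \<subseteq> (\<lambda>(M1,M2). log 2 (real M1) / real n + log 2 (real M2) / real n) ` ({1..Q^n}\<times>{1..Q^n})"
  proof
    fix s assume "s \<in> S"
    then obtain R1 R2 M1 M2 where h: "s = R1 + R2" "M1 \<ge> (1::nat)" "M2 \<ge> (1::nat)"
      "real M1 = 2 powr (R1 * real n)" "real M2 = 2 powr (R2 * real n)" "has_code Q n W M1 M2"
      unfolding S_def by blast
    from h(6) obtain E1 E2 D1 D2 where c: "zero_error_code Q n W M1 M2 E1 E2 D1 D2"
      unfolding has_code_def by blast
    have "M1 \<le> Q^n" "M2 \<le> Q^n" using code_bound1[OF c h(3)] code_bound2[OF c h(2)] by auto
    moreover have "R1 = log 2 (real M1) / real n" "R2 = log 2 (real M2) / real n"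
      using h(4,5) np by (simp_all add: log_powr)
    ultimately show "s \<in> (\<lambda>(M1,M2). log 2 (real M1) / real n + log 2 (real M2) / real n) ` ({1..Q^n}\<times>{1..Q^n})"
      using h(1-3) by force
  qed
  have fin: "finite S" by (rule finite_subset[OF sub]) simp
  have c11: "has_code Q n W 1 1"
    unfolding has_code_def zero_error_code_def
    apply (rule exI[of _ "\<lambda>_. replicate n 1"], rule exI[of _ "\<lambda>_. replicate n 1"])
    apply (rule exI[of _ "\<lambda>_. 1"], rule exI[of _ "\<lambda>_. 1"])
    using assms(1) by (auto simp: words_def)
  have "0 + 0 \<in> S" unfolding S_def using c11 by fastforce
  then have ne: "S \<noteq> {}" by auto
  have "Sup S \<in> S" using fin ne by (simp add: cSup_eq_Max)
  then obtain R1 R2 M1 M2 where h: "Sup S = R1 + R2" "M1 \<ge> (1::nat)" "M2 \<ge> (1::nat)"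
      "real M1 = 2 powr (R1 * real n)" "real M2 = 2 powr (R2 * real n)" "has_code Q n W M1 M2"
      unfolding S_def by blast
  have "r \<le> R1 + R2" using assms(3) h(1) unfolding sum_rate_def S_def by simp
  then have "2 powr (r * real n) \<le> 2 powr ((R1+R2) * real n)" using np
    by (intro powr_mono) (auto intro: mult_right_mono)
  also have "\<dots> = real (M1*M2)" using h(4,5) by (simp add: powr_add distrib_right)
  finally show ?thesis using h by blast
qed

lemma final_arith:
  fixes X K m D s0 :: real
  assumes "X \<ge> 0" "X \<ge> K - m * D" "m \<ge> 0" "m*m \<le> K" "s0*s0 \<le> K" "s0 \<ge> 0" "D \<ge> 0"
  shows "X \<ge> s0*s0 - s0*D"
proof -
  define t where "t = sqrt K"
  have K0: "K \<ge> 0" using assms by (smt (verit) mult_nonneg_nonneg)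
  have tt: "t*t = K" "t \<ge> 0" using K0 by (auto simp: t_def)
  have "m \<le> t" using tt assms(3,4) by (metis mult_mono' not_le mult_strict_mono')
  have "s0 \<le> t" using tt assms(5,6) by (metis mult_mono' not_le mult_strict_mono')
  show ?thesis
  proof (cases "s0 \<le> D")
    case True then show ?thesis using assms(1,6) by (smt (verit) mult_left_mono)
  next
    case False
    have "X \<ge> t*t - t*D" using assms(2,7) \<open>m \<le> t\<close> tt by (smt (verit) mult_right_mono)
    moreover have "(t - s0) * (t + s0 - D) \<ge> 0" using False \<open>s0 \<le> t\<close> assms(6) by (intro mult_nonneg_nonneg) auto
    ultimately show ?thesis by (simp add: algebra_simps)
  qed
qed

theorem proposition1:
  fixes q n :: nat and \<epsilon> r :: real and W :: channel
  assumes "q \<ge> 1"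
    and "0 \<le> \<epsilon>" and "\<epsilon> \<le> 1"
    and "in_support (2 ^ q) \<epsilon> W"
    and "n \<ge> 1"
    and "r \<ge> 0"
    and "sum_rate (2 ^ q) n W \<ge> r"
  shows "\<exists>A B. bpis (words (2 ^ q) n) (words (2 ^ q) n) (G_adj W n) A B \<and>
           real (card A * card B) \<ge>
             2 powr (r * real n) - 2 powr (r * real n / 2) * ((1 + 2 ^ q) ^ n - 2 ^ (n * q))"
proof -
  define Q :: nat where "Q = 2^q"
  have Q1: "Q \<ge> 1" by (simp add: Q_def)
  obtain M1 M2 where M: "M1 \<ge> 1" "M2 \<ge> 1" "has_code Q n W M1 M2" "real (M1*M2) \<ge> 2 powr (r * real n)"
    using get_code[OF Q1 assms(5)] assms(7) unfolding Q_def by blast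
  from M(3) obtain E1 E2 D1 D2 where c: "zero_error_code Q n W M1 M2 E1 E2 D1 D2"
    unfolding has_code_def by blast
  have E1w: "\<And>m. m \<in> {1..M1} \<Longrightarrow> E1 m \<in> words Q n" and E2w: "\<And>m. m \<in> {1..M2} \<Longrightarrow> E2 m \<in> words Q n"
    and dec: "\<And>m1 m2. m1 \<in> {1..M1} \<Longrightarrow> m2 \<in> {1..M2} \<Longrightarrow> D1 (chan1 W (E1 m1) (E2 m2)) = m1 \<and> D2 (chan2 W (E1 m1) (E2 m2)) = m2"
    using c unfolding zero_error_code_def by auto
  have sup: "in_support Q \<epsilon> W" using assms(4) by (simp add: Q_def)
  define Dn where "Dn = card (Lset Q n)"
  have DnR: "real Dn = (1 + 2 ^ q) ^ n - 2 ^ (n * q)"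
  proof -
    have "Q^n \<le> (Q+1)^n" by (simp add: power_mono)
    then have "real Dn = real ((Q+1)^n) - real (Q^n)" by (simp add: Dn_def Lset_card of_nat_diff)
    then show ?thesis by (simp add: Q_def power_mult[symmetric] mult.commute add.commute)
  qed
  define Bad1 where "Bad1 = {m1 \<in> {1..M1}. \<exists>m2\<in>{1..M2}. G_adj W n (E1 m1) (E2 m2)}"
  define Bad2 where "Bad2 = {m2 \<in> {1..M2}. \<exists>m1\<in>{1..M1}. G_adj W n (E1 m1) (E2 m2)}"
  have "Bad1 \<subseteq> D1 ` Lset Q n"
  proof
    fix m1 assume "m1 \<in> Bad1"
    then obtain m2 where h: "m1 \<in> {1..M1}" "m2 \<in> {1..M2}" "G_adj W n (E1 m1) (E2 m2)" unfolding Bad1_def by blast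
    have "chan1 W (E1 m1) (E2 m2) \<in> Lset Q n" using chan1_in_L(1)[OF sup E1w[OF h(1)] E2w[OF h(2)] h(3)] .
    then show "m1 \<in> D1 ` Lset Q n" using dec[OF h(1,2)] by (metis image_eqI)
  qed
  then have cB1: "card Bad1 \<le> Dn" unfolding Dn_def by (meson Lset_fin card_image_le card_mono finite_imageI le_trans)
  have "Bad2 \<subseteq> D2 ` Lset Q n"
  proof
    fix m2 assume "m2 \<in> Bad2"
    then obtain m1 where h: "m1 \<in> {1..M1}" "m2 \<in> {1..M2}" "G_adj W n (E1 m1) (E2 m2)" unfolding Bad2_def by blast
    have "chan2 W (E1 m1) (E2 m2) \<in> Lset Q n" using chan1_in_L(2)[OF sup E1w[OF h(1)] E2w[OF h(2)] h(3)] .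
    then show "m2 \<in> D2 ` Lset Q n" using dec[OF h(1,2)] by (metis image_eqI)
  qed
  then have cB2: "card Bad2 \<le> Dn" unfolding Dn_def by (meson Lset_fin card_image_le card_mono finite_imageI le_trans)
  define s0 where "s0 = 2 powr (r * real n / 2)"
  have s0sq: "s0 * s0 = 2 powr (r * real n)" unfolding s0_def by (simp add: powr_add[symmetric])
  have s0K: "s0 * s0 \<le> real M1 * real M2" using s0sq M(4) by simp
  have s0p: "s0 \<ge> 0" unfolding s0_def by simp
  have inj1: "inj_on E1 {1..M1}" using code_inj1[OF c M(2)] .
  have inj2: "inj_on E2 {1..M2}" using code_inj2[OF c M(1)] .
  show ?thesis
  proof (cases "M1 \<le> M2")
    case True
    define A where "A = E1 ` {1..M1}"
    define B where "B = E2 ` ({1..M2} - Bad2)"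
    have cA: "card A = M1" unfolding A_def using card_image[OF inj1] by simp
    have cB: "card B = card ({1..M2} - Bad2)" unfolding B_def
      using card_image[OF inj_on_subset[OF inj2]] by blast
    have "card {1..M2} - card Bad2 \<le> card ({1..M2} - Bad2)" by (rule diff_card_le_card_Diff) (simp add: Bad2_def)
    then have "M2 \<le> card B + Dn" using cB cB2 by simp
    then have "real (card B) \<ge> real M2 - real Dn" by linarith
    then have X: "real (card A * card B) \<ge> real M1 * real M2 - real M1 * real Dn"
      using cA by (simp add: right_diff_distrib[symmetric] mult_left_mono)
    have "real M1 * real M1 \<le> real M1 * real M2" using True by (simp add: mult_left_mono)
    from final_arith[OF _ X _ this s0K s0p] have fin: "real (card A * card B) \<ge> s0*s0 - s0 * real Dn" by simp
    have bp: "bpis (words Q n) (words Q n) (G_adj W n) A B"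
      unfolding bpis_def A_def B_def Bad2_def using E1w E2w by auto
    show ?thesis using bp fin s0sq DnR unfolding Q_def s0_def by metis
  next
    case False
    define A where "A = E1 ` ({1..M1} - Bad1)"
    define B where "B = E2 ` {1..M2}"
    have cB: "card B = M2" unfolding B_def using card_image[OF inj2] by simp
    have cA: "card A = card ({1..M1} - Bad1)" unfolding A_def
      using card_image[OF inj_on_subset[OF inj1]] by blast
    have "card {1..M1} - card Bad1 \<le> card ({1..M1} - Bad1)" by (rule diff_card_le_card_Diff) (simp add: Bad1_def)
    then have "M1 \<le> card A + Dn" using cA cB1 by simp
    then have "real (card A) \<ge> real M1 - real Dn" by linarith
    then have X: "real (card A * card B) \<ge> real M1 * real M2 - real M2 * real Dn"
    proof -
      have "(real M1 - real Dn) * real M2 \<le> real (card A) * real M2"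
        by (rule mult_right_mono) (use \<open>real (card A) \<ge> real M1 - real Dn\<close> in auto)
      then show ?thesis using cB by (simp add: algebra_simps)
    qed
    have "real M2 * real M2 \<le> real M1 * real M2" using False by (simp add: mult_right_mono)
    from final_arith[OF _ X _ this s0K s0p] have fin: "real (card A * card B) \<ge> s0*s0 - s0 * real Dn" by simp
    have bp: "bpis (words Q n) (words Q n) (G_adj W n) A B"
      unfolding bpis_def A_def B_def Bad1_def using E1w E2w by auto
    show ?thesis using bp fin s0sq DnR unfolding Q_def s0_def by metis
  qed
qed

end
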